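(* Let $\{A_1,\dots,A_k\}\subseteq H_n$ and $\{B_1,\dots,B_k\}\subseteq H_m$ be two commuting families, and let $U\in M_n$, $V\in M_m$ be unitary matrices such that $U^*A_iU=\mathrm{diag}(a_{i1},\dots,a_{in})$ and $VB_iV^*=\mathrm{diag}(b_{i1},\dots,b_{im})$ for $i=1,\dots,k$. Let $(a_{ij})\in M_{k,n}$ and $(b_{ij})\in M_{k,m}$ be the real matrices formed from these diagonals. The following are equivalent: (a) there is a completely positive map $\Phi:M_n\to M_m$ with $\Phi(A_i)=B_i$ for $i=1,\dots,k$; (b) there is an $n\times m$ entrywise nonnegative matrix $D=(d_{pq})$ with $(b_{ij})=(a_{ij})D$. If (b) holds and, for $1\le j\le m$, $F_j\in M_{n,m}$ denotes the matrix whose $j$-th column is $(\sqrt{d_{1j}},\dots,\sqrt{d_{nj}})^t$ and whose other entries are zero, then $B_i=\sum_{j=1}^m (UF_jV)^*A_i(UF_jV)$ for $i=1,\dots,k$. Furthermore: (1) a map $\Phi$ as in (a) can be chosen unital if and only if $D$ in (b) can be chosen column stochastic; (2) a map $\Phi$ as in (a) can be chosen trace preserving if and only if $D$ in (b) can be chosen row stochastic; (3) a map $\Phi$ as in (a) can be chosen unital and trace preserving if and only if $D$ in (b) can be chosen doubly stochastic (in which case $m=n$).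
   Context: $H_n$ is the set of $n\times n$ complex Hermitian matrices. A linear map $\Phi:M_n\to M_m$ is completely positive if for every $k\ge1$ the map $(A_{ij})\mapsto(\Phi(A_{ij}))$ on $k\times k$ block matrices with blocks in $M_n$ sends positive semidefinite matrices to positive semidefinite matrices; it is unital if $\Phi(I_n)=I_m$ and trace preserving if $\mathrm{tr}\,\Phi(A)=\mathrm{tr}\,A$ for all $A$. A nonnegative matrix is column (resp. row) stochastic if every column (resp. row) sums to 1, and doubly stochastic if square and both row and column stochastic. *)

theory Defs
  imports "Jordan_Normal_Form.Matrix" Complex_Main
begin

text \<open>Matrices are Jordan_Normal_Form matrices; M_n = complex mat in carrier_mat n n.
  Indices are 0-based.\<close>

definition cadj :: "complex mat \<Rightarrow> complex mat" where
  "cadj A = mat (dim_col A) (dim_row A) (\<lambda>(i,j). cnj (A $$ (j,i)))"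

definition hermitian_mat :: "nat \<Rightarrow> complex mat \<Rightarrow> bool" where
  "hermitian_mat n A \<longleftrightarrow> A \<in> carrier_mat n n \<and> cadj A = A"

definition unitary_mat :: "nat \<Rightarrow> complex mat \<Rightarrow> bool" where
  "unitary_mat n U \<longleftrightarrow> U \<in> carrier_mat n n \<and> cadj U * U = 1\<^sub>m n \<and> U * cadj U = 1\<^sub>m n"

definition psd_mat :: "nat \<Rightarrow> complex mat \<Rightarrow> bool" where
  "psd_mat n A \<longleftrightarrow> hermitian_mat n A \<and>
     (\<forall>x \<in> carrier_vec n. Re (conjugate x \<bullet> (A *\<^sub>v x)) \<ge> 0 \<and> Im (conjugate x \<bullet> (A *\<^sub>v x)) = 0)"

definition mtrace :: "complex mat \<Rightarrow> complex" where
  "mtrace A = (\<Sum>i<dim_row A. A $$ (i,i))"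

definition block :: "nat \<Rightarrow> complex mat \<Rightarrow> nat \<Rightarrow> nat \<Rightarrow> complex mat" where
  "block n X i j = mat n n (\<lambda>(p,q). X $$ (i*n + p, j*n + q))"

text \<open>the k x k block matrix (A_ij) \<mapsto> (\<Phi>(A_ij)), with \<Phi> : M_n \<rightarrow> M_m\<close>
definition ampliate :: "nat \<Rightarrow> nat \<Rightarrow> nat \<Rightarrow> (complex mat \<Rightarrow> complex mat) \<Rightarrow> complex mat \<Rightarrow> complex mat" where
  "ampliate n m k \<Phi> X = mat (k*m) (k*m)
     (\<lambda>(r,c). \<Phi> (block n X (r div m) (c div m)) $$ (r mod m, c mod m))"

definition linear_map_mat :: "nat \<Rightarrow> nat \<Rightarrow> (complex mat \<Rightarrow> complex mat) \<Rightarrow> bool" where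
  "linear_map_mat n m \<Phi> \<longleftrightarrow>
     (\<forall>X \<in> carrier_mat n n. \<Phi> X \<in> carrier_mat m m) \<and>
     (\<forall>X \<in> carrier_mat n n. \<forall>Y \<in> carrier_mat n n. \<Phi> (X + Y) = \<Phi> X + \<Phi> Y) \<and>
     (\<forall>X \<in> carrier_mat n n. \<forall>c. \<Phi> (c \<cdot>\<^sub>m X) = c \<cdot>\<^sub>m \<Phi> X)"

definition completely_positive :: "nat \<Rightarrow> nat \<Rightarrow> (complex mat \<Rightarrow> complex mat) \<Rightarrow> bool" where
  "completely_positive n m \<Phi> \<longleftrightarrow> linear_map_mat n m \<Phi> \<and>
     (\<forall>k\<ge>1. \<forall>X. psd_mat (k*n) X \<longrightarrow> psd_mat (k*m) (ampliate n m k \<Phi> X))"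

definition unital_map :: "nat \<Rightarrow> nat \<Rightarrow> (complex mat \<Rightarrow> complex mat) \<Rightarrow> bool" where
  "unital_map n m \<Phi> \<longleftrightarrow> \<Phi> (1\<^sub>m n) = 1\<^sub>m m"

definition trace_preserving :: "nat \<Rightarrow> (complex mat \<Rightarrow> complex mat) \<Rightarrow> bool" where
  "trace_preserving n \<Phi> \<longleftrightarrow> (\<forall>X \<in> carrier_mat n n. mtrace (\<Phi> X) = mtrace X)"

definition nonneg_mat :: "real mat \<Rightarrow> bool" where
  "nonneg_mat D \<longleftrightarrow> (\<forall>i<dim_row D. \<forall>j<dim_col D. D $$ (i,j) \<ge> 0)"

definition column_stochastic :: "real mat \<Rightarrow> bool" where
  "column_stochastic D \<longleftrightarrow> nonneg_mat D \<and> (\<forall>j<dim_col D. (\<Sum>i<dim_row D. D $$ (i,j)) = 1)"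

definition row_stochastic :: "real mat \<Rightarrow> bool" where
  "row_stochastic D \<longleftrightarrow> nonneg_mat D \<and> (\<forall>i<dim_row D. (\<Sum>j<dim_col D. D $$ (i,j)) = 1)"

definition doubly_stochastic :: "real mat \<Rightarrow> bool" where
  "doubly_stochastic D \<longleftrightarrow> dim_row D = dim_col D \<and> column_stochastic D \<and> row_stochastic D"

definition cdiag :: "nat \<Rightarrow> (nat \<Rightarrow> real) \<Rightarrow> complex mat" where
  "cdiag n f = mat n n (\<lambda>(i,j). if i = j then complex_of_real (f i) else 0)"

definition Fmat :: "real mat \<Rightarrow> nat \<Rightarrow> complex mat" where
  "Fmat D j = mat (dim_row D) (dim_col D)
     (\<lambda>(p,q). if q = j then complex_of_real (sqrt (D $$ (p,j))) else 0)"

definition msum :: "nat \<Rightarrow> nat \<Rightarrow> ('i \<Rightarrow> complex mat) \<Rightarrow> 'i set \<Rightarrow> complex mat" where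
  "msum d1 d2 f J = mat d1 d2 (\<lambda>(r,c). \<Sum>j\<in>J. f j $$ (r,c))"

end

theory Submission
  imports Defs
begin

lemma mult_entry:
  "A \<in> carrier_mat a b \<Longrightarrow> B \<in> carrier_mat b c \<Longrightarrow> i < a \<Longrightarrow> j < c \<Longrightarrow>
   (A * B) $$ (i,j) = (\<Sum>l<b. A $$ (i,l) * B $$ (l,j))"
  by (auto simp: scalar_prod_def atLeast0LessThan intro!: sum.cong)

lemma qf_entry:
  "A \<in> carrier_mat n n \<Longrightarrow> x \<in> carrier_vec n \<Longrightarrow>
   conjugate x \<bullet> (A *\<^sub>v x) = (\<Sum>i<n. cnj (x$i) * (\<Sum>j<n. A$$(i,j) * x$j))"
  by (auto simp: scalar_prod_def atLeast0LessThan intro!: sum.cong)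

definition Psi :: "nat \<Rightarrow> nat \<Rightarrow> complex mat \<Rightarrow> complex mat \<Rightarrow> real mat \<Rightarrow> complex mat \<Rightarrow> complex mat" where
"Psi n m U V D X = mat m m (\<lambda>(s,t). \<Sum>q<m. cnj(V$$(q,s)) * V$$(q,t) *
   (\<Sum>p<n. of_real(D$$(p,q)) * (\<Sum>i<n. \<Sum>j<n. cnj(U$$(i,p)) * X$$(i,j) * U$$(j,p))))"

lemma Psi_linear: "linear_map_mat n m (Psi n m U V D)"
  unfolding linear_map_mat_def
proof (intro conjI ballI allI)
  fix X :: "complex mat" assume "X \<in> carrier_mat n n" then show "Psi n m U V D X \<in> carrier_mat m m" by (simp add: Psi_def)
next
  fix X Y :: "complex mat" assume X: "X \<in> carrier_mat n n" and Y: "Y \<in> carrier_mat n n"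
  show "Psi n m U V D (X + Y) = Psi n m U V D X + Psi n m U V D Y"
    using X Y by (auto simp: Psi_def algebra_simps sum.distrib intro!: eq_matI sum.cong)
next
  fix X :: "complex mat" and c assume X: "X \<in> carrier_mat n n"
  show "Psi n m U V D (c \<cdot>\<^sub>m X) = c \<cdot>\<^sub>m Psi n m U V D X"
    using X by (auto simp: Psi_def algebra_simps sum_distrib_left intro!: eq_matI sum.cong)
qed


lemma sum_split_mult: "(\<Sum>r<k*m. f (r::nat)) = (\<Sum>a<k. \<Sum>s<m. (f (a*m+s)::'a::comm_monoid_add))"
proof -
  have "(\<Sum>r<k*m. f r) = (\<Sum>a<k. sum f {a*m..<a*m+m})"
    using sum.nat_group[of f m k] by simp
  also have "\<dots> = (\<Sum>a<k. \<Sum>s<m. f (a*m+s))"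
  proof (rule sum.cong[OF refl])
    fix a
    have "sum f {a*m..<a*m+m} = sum f {0+a*m..<m+a*m}" by (simp add: add.commute)
    also have "\<dots> = (\<Sum>s\<in>{0..<m}. f (s + a*m))" by (rule sum.shift_bounds_nat_ivl)
    finally show "sum f {a*m..<a*m+m} = (\<Sum>s<m. f (a*m+s))" by (simp add: atLeast0LessThan add.commute)
  qed
  finally show ?thesis .
qed

lemma idx_bound: "a < k \<Longrightarrow> i < (n::nat) \<Longrightarrow> a*n+i < k*n"
proof -
  assume "a < k" "i < n"
  then have "a*n + i < a*n + n" by simp
  also have "\<dots> = Suc a * n" by simp
  also have "\<dots> \<le> k*n" using \<open>a<k\<close> by (intro mult_le_mono1) simp
  finally show ?thesis .
qed

lemma perm4: "(\<Sum>s\<in>S. \<Sum>b\<in>B. \<Sum>t\<in>T. \<Sum>q\<in>Q. f s b t q) = (\<Sum>b\<in>B. \<Sum>q\<in>Q. \<Sum>s\<in>S. \<Sum>t\<in>T. f s b t q)"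
proof -
  have "(\<Sum>s\<in>S. \<Sum>b\<in>B. \<Sum>t\<in>T. \<Sum>q\<in>Q. f s b t q) = (\<Sum>b\<in>B. \<Sum>s\<in>S. \<Sum>t\<in>T. \<Sum>q\<in>Q. f s b t q)"
    by (rule sum.swap)
  also have "\<dots> = (\<Sum>b\<in>B. \<Sum>s\<in>S. \<Sum>q\<in>Q. \<Sum>t\<in>T. f s b t q)"
    by (intro sum.cong refl sum.swap)
  also have "\<dots> = (\<Sum>b\<in>B. \<Sum>q\<in>Q. \<Sum>s\<in>S. \<Sum>t\<in>T. f s b t q)"
    by (intro sum.cong refl sum.swap)
  finally show ?thesis .
qed


definition hh :: "nat \<Rightarrow> complex mat \<Rightarrow> complex mat \<Rightarrow> nat \<Rightarrow> nat \<Rightarrow> nat \<Rightarrow> complex" where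
 "hh n U X p a b = (\<Sum>i<n. \<Sum>j<n. cnj(U$$(i,p)) * X$$(a*n+i, b*n+j) * U$$(j,p))"

lemma amp_entry:
  assumes "a < k" "b < k" "s < m" "t < m"
  shows "ampliate n m k (Psi n m U V D) X $$ (a*m+s, b*m+t) =
     (\<Sum>q<m. cnj(V$$(q,s)) * V$$(q,t) * (\<Sum>p<n. of_real(D$$(p,q)) * hh n U X p a b))"
proof -
  have m: "m > 0" using assms by auto
  have d1: "(a*m+s) div m = a" "(a*m+s) mod m = s" "(b*m+t) div m = b" "(b*m+t) mod m = t"
    using assms by auto
  show ?thesis
    using assms idx_bound[of a k s m] idx_bound[of b k t m]
    by (simp add: ampliate_def d1 Psi_def hh_def block_def)
qed


lemma qf_amp:
  fixes X U V :: "complex mat" and y :: "complex vec" and D :: "real mat"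
  assumes X: "X \<in> carrier_mat (k*n) (k*n)" and y: "y \<in> carrier_vec (k*m)"
  defines "w \<equiv> \<lambda>a q. (\<Sum>t<m. V$$(q,t) * y$(a*m+t))"
  defines "G \<equiv> \<lambda>q a b. (\<Sum>p<n. complex_of_real (D$$(p,q)) * hh n U X p a b)"
  shows "conjugate y \<bullet> (ampliate n m k (Psi n m U V D) X *\<^sub>v y) =
    (\<Sum>a<k. \<Sum>b<k. \<Sum>q<m. cnj(w a q) * w b q * G q a b)"
proof -
  let ?M = "ampliate n m k (Psi n m U V D) X"
  have M: "?M \<in> carrier_mat (k*m) (k*m)" by (simp add: ampliate_def)
  have "conjugate y \<bullet> (?M *\<^sub>v y) = (\<Sum>r<k*m. cnj (y$r) * (\<Sum>c<k*m. ?M$$(r,c) * y$c))"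
    by (rule qf_entry[OF M y])
  also have "\<dots> = (\<Sum>a<k. \<Sum>s<m. cnj (y$(a*m+s)) * (\<Sum>b<k. \<Sum>t<m. ?M$$(a*m+s,b*m+t) * y$(b*m+t)))"
    by (simp add: sum_split_mult)
  also have "\<dots> = (\<Sum>a<k. \<Sum>s<m. cnj (y$(a*m+s)) * (\<Sum>b<k. \<Sum>t<m.
      (\<Sum>q<m. cnj(V$$(q,s)) * V$$(q,t) * G q a b) * y$(b*m+t)))"
    by (intro sum.cong refl arg_cong2[where f="(*)"], simp add: amp_entry G_def)
  also have "\<dots> = (\<Sum>a<k. \<Sum>s<m. \<Sum>b<k. \<Sum>t<m. \<Sum>q<m.
      cnj (y$(a*m+s)) * cnj(V$$(q,s)) * (V$$(q,t) * y$(b*m+t)) * G q a b)"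
    by (simp add: sum_distrib_left sum_distrib_right mult_ac)
  also have "\<dots> = (\<Sum>a<k. \<Sum>b<k. \<Sum>q<m. \<Sum>s<m. \<Sum>t<m.
      cnj (y$(a*m+s)) * cnj(V$$(q,s)) * (V$$(q,t) * y$(b*m+t)) * G q a b)"
    by (intro sum.cong refl perm4)
  also have "\<dots> = (\<Sum>a<k. \<Sum>b<k. \<Sum>q<m. cnj(w a q) * w b q * G q a b)"
    by (simp add: w_def sum_distrib_left sum_distrib_right mult_ac)
  finally show ?thesis .
qed

lemma qf_z:
  fixes X U V :: "complex mat" and y :: "complex vec" and wq :: "nat \<Rightarrow> complex" and p :: nat
  assumes X: "X \<in> carrier_mat (k*n) (k*n)"
  defines "z \<equiv> vec (k*n) (\<lambda>R. U$$(R mod n, p) * wq (R div n))"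
  shows "conjugate z \<bullet> (X *\<^sub>v z) = (\<Sum>a<k. \<Sum>b<k. cnj(wq a) * wq b * hh n U X p a b)"
proof -
  have z: "z \<in> carrier_vec (k*n)" by (simp add: z_def)
  have "conjugate z \<bullet> (X *\<^sub>v z) = (\<Sum>r<k*n. cnj (z$r) * (\<Sum>c<k*n. X$$(r,c) * z$c))"
    by (rule qf_entry[OF X z])
  also have "\<dots> = (\<Sum>a<k. \<Sum>i<n. cnj (z$(a*n+i)) * (\<Sum>b<k. \<Sum>j<n. X$$(a*n+i,b*n+j) * z$(b*n+j)))"
    by (simp add: sum_split_mult)
  also have "\<dots> = (\<Sum>a<k. \<Sum>i<n. \<Sum>b<k. \<Sum>j<n.
       cnj(wq a) * wq b * (cnj(U$$(i,p)) * X$$(a*n+i,b*n+j) * U$$(j,p)))"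
    by (intro sum.cong refl, simp add: z_def idx_bound sum_distrib_left sum_distrib_right mult_ac)
  also have "\<dots> = (\<Sum>a<k. \<Sum>b<k. \<Sum>i<n. \<Sum>j<n.
       cnj(wq a) * wq b * (cnj(U$$(i,p)) * X$$(a*n+i,b*n+j) * U$$(j,p)))"
    by (intro sum.cong refl sum.swap)
  also have "\<dots> = (\<Sum>a<k. \<Sum>b<k. cnj(wq a) * wq b * hh n U X p a b)"
    by (simp add: hh_def sum_distrib_left)
  finally show ?thesis .
qed


lemma herm_entry: "hermitian_mat N X \<Longrightarrow> i < N \<Longrightarrow> j < N \<Longrightarrow> X$$(i,j) = cnj (X$$(j,i))"
proof -
  assume h: "hermitian_mat N X" "i < N" "j < N"
  have X: "X \<in> carrier_mat N N" and c: "cadj X = X" using h by (auto simp: hermitian_mat_def)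
  have "cadj X $$ (i,j) = cnj (X$$(j,i))" using X h(2,3) by (simp add: cadj_def)
  then show ?thesis using c by simp
qed

lemma hh_cnj:
  assumes "hermitian_mat (k*n) X" "a < k" "b < k"
  shows "cnj (hh n U X p b a) = hh n U X p a b"
proof -
  have "cnj (hh n U X p b a) = (\<Sum>i<n. \<Sum>j<n. U$$(i,p) * X$$(a*n+j, b*n+i) * cnj(U$$(j,p)))"
    unfolding hh_def using assms
    by (auto simp: cnj_sum intro!: sum.cong dest: herm_entry[of "k*n" X "a*n+_" "b*n+_"] intro: idx_bound)
  also have "\<dots> = (\<Sum>j<n. \<Sum>i<n. U$$(i,p) * X$$(a*n+j, b*n+i) * cnj(U$$(j,p)))"
    by (rule sum.swap)
  also have "\<dots> = hh n U X p a b" unfolding hh_def by (simp add: mult_ac)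
  finally show ?thesis .
qed

lemma perm4b: "(\<Sum>a\<in>A. \<Sum>b\<in>B. \<Sum>q\<in>Q. \<Sum>p\<in>P. f a b q p) = (\<Sum>p\<in>P. \<Sum>q\<in>Q. \<Sum>a\<in>A. \<Sum>b\<in>B. f a b q p)"
proof -
  have "(\<Sum>a\<in>A. \<Sum>b\<in>B. \<Sum>q\<in>Q. \<Sum>p\<in>P. f a b q p) = (\<Sum>a\<in>A. \<Sum>b\<in>B. \<Sum>p\<in>P. \<Sum>q\<in>Q. f a b q p)"
    by (intro sum.cong refl sum.swap)
  also have "\<dots> = (\<Sum>a\<in>A. \<Sum>p\<in>P. \<Sum>b\<in>B. \<Sum>q\<in>Q. f a b q p)"
    by (intro sum.cong refl sum.swap)
  also have "\<dots> = (\<Sum>p\<in>P. \<Sum>a\<in>A. \<Sum>b\<in>B. \<Sum>q\<in>Q. f a b q p)"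
    by (rule sum.swap)
  also have "\<dots> = (\<Sum>p\<in>P. \<Sum>a\<in>A. \<Sum>q\<in>Q. \<Sum>b\<in>B. f a b q p)"
    by (intro sum.cong refl sum.swap)
  also have "\<dots> = (\<Sum>p\<in>P. \<Sum>q\<in>Q. \<Sum>a\<in>A. \<Sum>b\<in>B. f a b q p)"
    by (intro sum.cong refl sum.swap)
  finally show ?thesis .
qed

lemma Psi_cp:
  fixes U V :: "complex mat" and D :: "real mat"
  assumes Dnn: "\<forall>p<n. \<forall>q<m. D$$(p,q) \<ge> 0"
  shows "completely_positive n m (Psi n m U V D)"
  unfolding completely_positive_def
proof (intro conjI allI impI Psi_linear)
  fix k :: nat and X :: "complex mat"
  assume "k \<ge> 1" and psd: "psd_mat (k*n) X"
  have herm: "hermitian_mat (k*n) X" and Xc: "X \<in> carrier_mat (k*n) (k*n)"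
    using psd by (auto simp: psd_mat_def hermitian_mat_def)
  let ?M = "ampliate n m k (Psi n m U V D) X"
  have M: "?M \<in> carrier_mat (k*m) (k*m)" by (simp add: ampliate_def)
  have hM: "hermitian_mat (k*m) ?M"
    unfolding hermitian_mat_def
  proof (intro conjI M eq_matI)
    fix r c assume r: "r < dim_row ?M" and c: "c < dim_col ?M"
    then have r': "r < k*m" and c': "c < k*m" using M by auto
    then have mpos: "m > 0" by (cases m) auto
    define a s b t where "a = r div m" "s = r mod m" "b = c div m" "t = c mod m"
    have rr: "r = a*m+s" "c = b*m+t" using a_s_b_t_def by auto
    have bnd: "a < k" "b < k" "s < m" "t < m" using a_s_b_t_def r' c' mpos
      by (auto simp: less_mult_imp_div_less)
    have "cadj ?M $$ (r,c) = cnj (?M $$ (c,r))" using r' c' by (simp add: cadj_def ampliate_def)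
    also have "\<dots> = ?M $$ (r,c)"
      unfolding rr using bnd
      by (simp add: amp_entry cnj_sum hh_cnj[OF herm] mult_ac)
    finally show "cadj ?M $$ (r,c) = ?M $$ (r,c)" .
  qed (auto simp: cadj_def ampliate_def)
  show "psd_mat (k*m) ?M"
    unfolding psd_mat_def
  proof (rule conjI[OF hM], intro ballI)
    fix y :: "complex vec" assume y: "y \<in> carrier_vec (k*m)"
    define w where "w = (\<lambda>a q. (\<Sum>t<m. V$$(q,t) * y$(a*m+t)))"
    define z where "z = (\<lambda>p q. vec (k*n) (\<lambda>R. U$$(R mod n, p) * w (R div n) q))"
    have "conjugate y \<bullet> (?M *\<^sub>v y) = (\<Sum>a<k. \<Sum>b<k. \<Sum>q<m. cnj(w a q) * w b q *
       (\<Sum>p<n. complex_of_real (D$$(p,q)) * hh n U X p a b))"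
      unfolding w_def by (rule qf_amp[OF Xc y])
    also have "\<dots> = (\<Sum>a<k. \<Sum>b<k. \<Sum>q<m. \<Sum>p<n. complex_of_real (D$$(p,q)) * (cnj(w a q) * w b q * hh n U X p a b))"
      by (simp add: sum_distrib_left mult_ac)
    also have "\<dots> = (\<Sum>p<n. \<Sum>q<m. \<Sum>a<k. \<Sum>b<k. complex_of_real (D$$(p,q)) * (cnj(w a q) * w b q * hh n U X p a b))"
      by (rule perm4b)
    also have "\<dots> = (\<Sum>p<n. \<Sum>q<m. complex_of_real (D$$(p,q)) * (conjugate (z p q) \<bullet> (X *\<^sub>v z p q)))"
    proof -
      have qz: "conjugate (z p q) \<bullet> (X *\<^sub>v z p q) = (\<Sum>a<k. \<Sum>b<k. cnj(w a q) * w b q * hh n U X p a b)" for p q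
        unfolding z_def by (rule qf_z[OF Xc])
      show ?thesis by (simp add: qz sum_distrib_left)
    qed
    finally have eq: "conjugate y \<bullet> (?M *\<^sub>v y) = \<dots>" .
    have zpos: "Re (conjugate (z p q) \<bullet> (X *\<^sub>v z p q)) \<ge> 0 \<and> Im (conjugate (z p q) \<bullet> (X *\<^sub>v z p q)) = 0" for p q
      using psd unfolding psd_mat_def by (auto simp: z_def)
    show "Re (conjugate y \<bullet> (?M *\<^sub>v y)) \<ge> 0 \<and> Im (conjugate y \<bullet> (?M *\<^sub>v y)) = 0"
      unfolding eq using zpos Dnn by (auto simp: Re_sum Im_sum intro!: sum_nonneg)
  qed
qed


lemma cadj_carrier[simp]: "X \<in> carrier_mat a b \<Longrightarrow> cadj X \<in> carrier_mat b a"
  by (simp add: cadj_def)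

lemma cadj_entry[simp]: "i < dim_col X \<Longrightarrow> j < dim_row X \<Longrightarrow> cadj X $$ (i,j) = cnj (X $$ (j,i))"
  by (simp add: cadj_def)

lemma cadj_dims[simp]: "dim_row (cadj X) = dim_col X" "dim_col (cadj X) = dim_row X"
  by (simp_all add: cadj_def)

lemma unit1:
  assumes "unitary_mat N W" "i < N" "j < N"
  shows "(\<Sum>l<N. cnj (W$$(l,i)) * W$$(l,j)) = (if i = j then 1 else 0)"
proof -
  have W: "W \<in> carrier_mat N N" and e: "cadj W * W = 1\<^sub>m N" using assms by (auto simp: unitary_mat_def)
  have "(cadj W * W) $$ (i,j) = (\<Sum>l<N. cnj (W$$(l,i)) * W$$(l,j))"
    using assms W by (subst mult_entry[of _ N N _ N]) (auto intro!: sum.cong)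
  then show ?thesis using e assms by simp
qed

lemma unit2:
  assumes "unitary_mat N W" "i < N" "j < N"
  shows "(\<Sum>l<N. W$$(i,l) * cnj (W$$(j,l))) = (if i = j then 1 else 0)"
proof -
  have W: "W \<in> carrier_mat N N" and e: "W * cadj W = 1\<^sub>m N" using assms by (auto simp: unitary_mat_def)
  have "(W * cadj W) $$ (i,j) = (\<Sum>l<N. W$$(i,l) * cnj (W$$(j,l)))"
    using assms W by (subst mult_entry[of _ N N _ N]) (auto intro!: sum.cong)
  then show ?thesis using e assms by simp
qed

lemma triple_entry:
  assumes "X \<in> carrier_mat a b" "Y \<in> carrier_mat b c" "Z \<in> carrier_mat c d" "i < a" "j < d"
  shows "(X * Y * Z) $$ (i,j) = (\<Sum>l<c. (\<Sum>l'<b. X$$(i,l') * Y$$(l',l)) * Z$$(l,j))"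
proof -
  have "(X * Y * Z) $$ (i,j) = (\<Sum>l<c. (X*Y)$$(i,l) * Z$$(l,j))"
    using assms by (intro mult_entry[of _ a c _ d]) auto
  also have "\<dots> = (\<Sum>l<c. (\<Sum>l'<b. X$$(i,l') * Y$$(l',l)) * Z$$(l,j))"
    using assms by (intro sum.cong refl arg_cong2[where f="(*)"] mult_entry[of _ a b _ c]) auto
  finally show ?thesis .
qed

lemma LA:
  assumes U: "unitary_mat n U" and A: "A \<in> carrier_mat n n" and d: "cadj U * A * U = cdiag n f"
    and ij: "i < n" "j < n"
  shows "A $$ (i,j) = (\<Sum>p<n. U$$(i,p) * of_real (f p) * cnj (U$$(j,p)))"
proof -
  have Uc: "U \<in> carrier_mat n n" and e1: "cadj U * U = 1\<^sub>m n" and e2: "U * cadj U = 1\<^sub>m n"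
    using U by (auto simp: unitary_mat_def)
  have cU: "cadj U \<in> carrier_mat n n" using Uc by simp
  have "U * cdiag n f * cadj U = U * (cadj U * A * U) * cadj U" using d by simp
  also have "\<dots> = U * (cadj U * (A * U)) * cadj U" using assoc_mult_mat[OF cU A Uc] by simp
  also have "\<dots> = (U * cadj U) * (A * U) * cadj U" using assoc_mult_mat[OF Uc cU mult_carrier_mat[OF A Uc]] by simp
  also have "\<dots> = (A * U) * cadj U" using e2 A Uc by simp
  also have "\<dots> = A * (U * cadj U)" using assoc_mult_mat[OF A Uc cU] by simp
  also have "\<dots> = A" using e2 A by simp
  finally have "A = U * cdiag n f * cadj U" by simp
  then have "A $$ (i,j) = (U * cdiag n f * cadj U) $$ (i,j)" by simp
  also have "\<dots> = (\<Sum>l<n. (\<Sum>l'<n. U$$(i,l') * cdiag n f $$(l',l)) * cadj U$$(l,j))"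
    using Uc ij by (intro triple_entry[of _ n n _ n _ n]) (auto simp: cdiag_def)
  also have "\<dots> = (\<Sum>p<n. U$$(i,p) * of_real (f p) * cnj (U$$(j,p)))"
    using Uc ij by (intro sum.cong refl) (auto simp: cdiag_def if_distrib cong: if_cong)
  finally show ?thesis .
qed

lemma LB:
  assumes V: "unitary_mat m V" and B: "B \<in> carrier_mat m m" and d: "V * B * cadj V = cdiag m f"
    and ij: "i < m" "j < m"
  shows "B $$ (i,j) = (\<Sum>q<m. cnj (V$$(q,i)) * of_real (f q) * V$$(q,j))"
proof -
  have Vc: "V \<in> carrier_mat m m" and e1: "cadj V * V = 1\<^sub>m m" and e2: "V * cadj V = 1\<^sub>m m"
    using V by (auto simp: unitary_mat_def)
  have cV: "cadj V \<in> carrier_mat m m" using Vc by simp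
  have "cadj V * cdiag m f * V = cadj V * (V * B * cadj V) * V" using d by simp
  also have "\<dots> = cadj V * (V * (B * cadj V)) * V" using assoc_mult_mat[OF Vc B cV] by simp
  also have "\<dots> = (cadj V * V) * (B * cadj V) * V" using assoc_mult_mat[OF cV Vc mult_carrier_mat[OF B cV]] by simp
  also have "\<dots> = (B * cadj V) * V" using e1 B Vc by simp
  also have "\<dots> = B * (cadj V * V)" using assoc_mult_mat[OF B cV Vc] by simp
  also have "\<dots> = B" using e1 B by simp
  finally have "B = cadj V * cdiag m f * V" by simp
  then have "B $$ (i,j) = (cadj V * cdiag m f * V) $$ (i,j)" by simp
  also have "\<dots> = (\<Sum>l<m. (\<Sum>l'<m. cadj V$$(i,l') * cdiag m f $$(l',l)) * V$$(l,j))"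
    using Vc ij by (intro triple_entry[of _ m m _ m _ m]) (auto simp: cdiag_def)
  also have "\<dots> = (\<Sum>q<m. cnj (V$$(q,i)) * of_real (f q) * V$$(q,j))"
    using Vc ij by (intro sum.cong refl) (auto simp: cdiag_def if_distrib cong: if_cong)
  finally show ?thesis .
qed

lemma diag_entry:
  assumes U: "unitary_mat n U" and A: "A \<in> carrier_mat n n" and d: "cadj U * A * U = cdiag n f"
    and p: "p < n"
  shows "(\<Sum>i<n. \<Sum>j<n. cnj(U$$(i,p)) * A$$(i,j) * U$$(j,p)) = of_real (f p)"
proof -
  have Uc: "U \<in> carrier_mat n n" using U by (auto simp: unitary_mat_def)
  have "of_real (f p) = (cadj U * A * U) $$ (p,p)" using d p by (simp add: cdiag_def)
  also have "\<dots> = (\<Sum>l<n. (\<Sum>l'<n. cadj U$$(p,l') * A $$(l',l)) * U$$(l,p))"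
    using Uc A p by (intro triple_entry[of _ n n _ n _ n]) auto
  also have "\<dots> = (\<Sum>j<n. \<Sum>i<n. cnj(U$$(i,p)) * A$$(i,j) * U$$(j,p))"
    using Uc p by (simp add: sum_distrib_right)
  also have "\<dots> = (\<Sum>i<n. \<Sum>j<n. cnj(U$$(i,p)) * A$$(i,j) * U$$(j,p))" by (rule sum.swap)
  finally show ?thesis by simp
qed


lemma sum_delta_mid: "i < (N::nat) \<Longrightarrow> (\<Sum>j<N. a * (if i = j then 1 else 0) * (b j::complex)) = a * b i"
proof -
  assume "i < N"
  have "(\<Sum>j<N. a * (if i = j then 1 else 0) * b j) = (\<Sum>j<N. if i = j then a * b j else 0)"
    by (rule sum.cong) auto
  also have "\<dots> = a * b i" using \<open>i < N\<close> by (subst sum.delta') auto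
  finally show ?thesis .
qed

lemma Psi_maps:
  assumes U: "unitary_mat n U" and V: "unitary_mat m V" and A: "A \<in> carrier_mat n n"
    and B: "B \<in> carrier_mat m m" and dA: "cadj U * A * U = cdiag n fa"
    and dB: "V * B * cadj V = cdiag m fb"
    and fb: "\<forall>q<m. fb q = (\<Sum>p<n. fa p * D$$(p,q))"
  shows "Psi n m U V D A = B"
proof (rule eq_matI)
  fix s t assume "s < dim_row B" "t < dim_col B"
  then have st: "s < m" "t < m" using B by auto
  have "Psi n m U V D A $$ (s,t) = (\<Sum>q<m. cnj(V$$(q,s)) * V$$(q,t) *
     (\<Sum>p<n. of_real(D$$(p,q)) * of_real (fa p)))"
    using st by (simp add: Psi_def diag_entry[OF U A dA])
  also have "\<dots> = (\<Sum>q<m. cnj (V$$(q,s)) * of_real (fb q) * V$$(q,t))"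
    using fb by (intro sum.cong refl) (simp add: mult_ac)
  also have "\<dots> = B $$ (s,t)" using LB[OF V B dB st] by simp
  finally show "Psi n m U V D A $$ (s,t) = B $$ (s,t)" .
qed (use B in \<open>auto simp: Psi_def\<close>)

lemma Psi_unital:
  assumes U: "unitary_mat n U" and V: "unitary_mat m V" and D: "D \<in> carrier_mat n m"
    and cs: "column_stochastic D"
  shows "unital_map n m (Psi n m U V D)"
  unfolding unital_map_def
proof (rule eq_matI)
  fix s t assume "s < dim_row (1\<^sub>m m :: complex mat)" "t < dim_col (1\<^sub>m m :: complex mat)"
  then have st: "s < m" "t < m" by auto
  have inner: "(\<Sum>i<n. \<Sum>j<n. cnj(U$$(i,p)) * (1\<^sub>m n :: complex mat)$$(i,j) * U$$(j,p)) = 1" if "p < n" for p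
  proof -
    have "(\<Sum>i<n. \<Sum>j<n. cnj(U$$(i,p)) * (1\<^sub>m n :: complex mat)$$(i,j) * U$$(j,p)) = (\<Sum>i<n. cnj(U$$(i,p)) * U$$(i,p))"
      by (intro sum.cong refl) (simp add: sum_delta_mid)
    also have "\<dots> = 1" using unit1[OF U that that] by simp
    finally show ?thesis .
  qed
  have col: "(\<Sum>p<n. complex_of_real (D$$(p,q))) = 1" if "q < m" for q
  proof -
    have "(\<Sum>p<n. D$$(p,q)) = 1" using cs that D by (auto simp: column_stochastic_def)
    then show ?thesis by (metis of_real_1 of_real_sum)
  qed
  have sumq: "(\<Sum>p<n. complex_of_real (D$$(p,q)) * (\<Sum>i<n. \<Sum>j<n. cnj (U$$(i,p)) * (1\<^sub>m n :: complex mat) $$(i,j) * U$$(j,p))) = 1"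
    if q: "q < m" for q
  proof -
    have "(\<Sum>p<n. complex_of_real (D$$(p,q)) * (\<Sum>i<n. \<Sum>j<n. cnj (U$$(i,p)) * (1\<^sub>m n :: complex mat) $$(i,j) * U$$(j,p)))
       = (\<Sum>p<n. complex_of_real (D$$(p,q)))"
    proof (rule sum.cong[OF refl])
      fix p assume "p \<in> {..<n}"
      then show "complex_of_real (D$$(p,q)) * (\<Sum>i<n. \<Sum>j<n. cnj (U$$(i,p)) * (1\<^sub>m n :: complex mat) $$(i,j) * U$$(j,p))
        = complex_of_real (D$$(p,q))" using inner[of p] by simp
    qed
    then show ?thesis using col[OF q] by simp
  qed
  have "Psi n m U V D (1\<^sub>m n) $$ (s,t) = (\<Sum>q<m. cnj(V$$(q,s)) * V$$(q,t))"
    using st by (simp add: Psi_def sumq del: index_one_mat)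
  also have "\<dots> = (1\<^sub>m m :: complex mat) $$ (s,t)" using unit1[OF V st] st by simp
  finally show "Psi n m U V D (1\<^sub>m n) $$ (s,t) = (1\<^sub>m m :: complex mat) $$ (s,t)" .
qed (auto simp: Psi_def)

lemma Psi_tp:
  assumes U: "unitary_mat n U" and V: "unitary_mat m V" and D: "D \<in> carrier_mat n m"
    and rs: "row_stochastic D"
  shows "trace_preserving n (Psi n m U V D)"
  unfolding trace_preserving_def
proof
  fix X :: "complex mat" assume X: "X \<in> carrier_mat n n"
  define g where "g = (\<lambda>p. \<Sum>i<n. \<Sum>j<n. cnj(U$$(i,p)) * X$$(i,j) * U$$(j,p))"
  define c where "c = (\<lambda>q. \<Sum>p<n. complex_of_real (D$$(p,q)) * g p)"
  have row: "(\<Sum>q<m. complex_of_real (D$$(p,q))) = 1" if "p < n" for p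
  proof -
    have "(\<Sum>q<m. D$$(p,q)) = 1" using rs that D by (auto simp: row_stochastic_def)
    then show ?thesis by (metis of_real_1 of_real_sum)
  qed
  have "mtrace (Psi n m U V D X) = (\<Sum>s<m. \<Sum>q<m. cnj(V$$(q,s)) * V$$(q,s) * c q)"
    by (simp add: mtrace_def Psi_def c_def g_def)
  also have "\<dots> = (\<Sum>q<m. (\<Sum>s<m. V$$(q,s) * cnj(V$$(q,s))) * c q)"
    by (subst sum.swap) (simp add: sum_distrib_right sum_distrib_left mult_ac)
  also have "\<dots> = (\<Sum>q<m. c q)" using unit2[OF V] by simp
  also have "\<dots> = (\<Sum>p<n. (\<Sum>q<m. complex_of_real (D$$(p,q))) * g p)"
    unfolding c_def by (subst sum.swap) (simp add: sum_distrib_right)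
  also have "\<dots> = (\<Sum>p<n. g p)" using row by simp
  also have "\<dots> = (\<Sum>i<n. \<Sum>j<n. X$$(i,j) * (\<Sum>p<n. U$$(j,p) * cnj(U$$(i,p))))"
    unfolding g_def
    by (subst sum.swap, rule sum.cong[OF refl], subst sum.swap) (simp add: sum_distrib_left mult_ac)
  also have "\<dots> = (\<Sum>i<n. X$$(i,i))"
  proof (intro sum.cong refl)
    fix i assume i: "i \<in> {..<n}"
    have "(\<Sum>j<n. X$$(i,j) * (\<Sum>p<n. U$$(j,p) * cnj(U$$(i,p)))) = (\<Sum>j<n. if i = j then X$$(i,j) else 0)"
      using i by (intro sum.cong refl) (auto simp: unit2[OF U])
    then show "(\<Sum>j<n. X$$(i,j) * (\<Sum>p<n. U$$(j,p) * cnj(U$$(i,p)))) = X$$(i,i)" using i by simp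
  qed
  also have "\<dots> = mtrace X" using X by (simp add: mtrace_def)
  finally show "mtrace (Psi n m U V D X) = mtrace X" .
qed


lemma lin_sum:
  fixes N :: nat
  assumes L: "linear_map_mat n m \<Phi>" and P: "\<forall>p<N. P p \<in> carrier_mat n n"
  shows "\<Phi> (mat n n (\<lambda>(i,j). \<Sum>p<N. c p * P p $$ (i,j))) = mat m m (\<lambda>(s,t). \<Sum>p<N. c p * \<Phi> (P p) $$ (s,t))"
  using P
proof (induction N)
  case 0
  have Z: "(0\<^sub>m n n :: complex mat) \<in> carrier_mat n n" by simp
  have e: "mat n n (\<lambda>(i,j). \<Sum>p<0. c p * P p $$ (i,j)) = 0 \<cdot>\<^sub>m (0\<^sub>m n n :: complex mat)" by (rule eq_matI) auto
  have h: "\<Phi> (0 \<cdot>\<^sub>m 0\<^sub>m n n) = 0 \<cdot>\<^sub>m \<Phi> (0\<^sub>m n n)" using L Z unfolding linear_map_mat_def by blast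
  have "\<Phi> (0\<^sub>m n n) \<in> carrier_mat m m" using L Z by (simp add: linear_map_mat_def)
  then show ?case unfolding e h by (intro eq_matI) auto
next
  case (Suc N)
  have PN: "P N \<in> carrier_mat n n" using Suc.prems by auto
  have S: "mat n n (\<lambda>(i,j). \<Sum>p<N. c p * P p $$ (i,j)) \<in> carrier_mat n n" by simp
  have e: "mat n n (\<lambda>(i,j). \<Sum>p<Suc N. c p * P p $$ (i,j)) =
    mat n n (\<lambda>(i,j). \<Sum>p<N. c p * P p $$ (i,j)) + c N \<cdot>\<^sub>m P N"
    using PN by (intro eq_matI) auto
  have PhiN: "\<Phi> (P N) \<in> carrier_mat m m" using L PN by (simp add: linear_map_mat_def)
  have "\<Phi> (mat n n (\<lambda>(i,j). \<Sum>p<Suc N. c p * P p $$ (i,j))) =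
     \<Phi> (mat n n (\<lambda>(i,j). \<Sum>p<N. c p * P p $$ (i,j))) + c N \<cdot>\<^sub>m \<Phi> (P N)"
    unfolding e using L S PN by (simp add: linear_map_mat_def)
  also have "\<dots> = mat m m (\<lambda>(s,t). \<Sum>p<N. c p * \<Phi> (P p) $$ (s,t)) + c N \<cdot>\<^sub>m \<Phi> (P N)"
  proof -
    have "\<forall>p<N. P p \<in> carrier_mat n n" using Suc.prems by auto
    from Suc.IH[OF this] show ?thesis by (simp only:)
  qed
  also have "\<dots> = mat m m (\<lambda>(s,t). \<Sum>p<Suc N. c p * \<Phi> (P p) $$ (s,t))"
    using PhiN by (intro eq_matI) auto
  finally show ?case .
qed

definition Pm :: "nat \<Rightarrow> complex mat \<Rightarrow> nat \<Rightarrow> complex mat" where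
  "Pm n U p = mat n n (\<lambda>(i,j). U$$(i,p) * cnj (U$$(j,p)))"

lemma Pm_carrier[simp]: "Pm n U p \<in> carrier_mat n n" by (simp add: Pm_def)

lemma Pm_psd: "psd_mat n (Pm n U p)"
  unfolding psd_mat_def
proof (intro conjI ballI)
  show "hermitian_mat n (Pm n U p)" unfolding hermitian_mat_def
    by (auto simp: Pm_def cadj_def intro!: eq_matI)
next
  fix x :: "complex vec" assume x: "x \<in> carrier_vec n"
  define c where "c = (\<Sum>j<n. cnj (U$$(j,p)) * x$j)"
  have "conjugate x \<bullet> (Pm n U p *\<^sub>v x) = (\<Sum>i<n. cnj (x$i) * (\<Sum>j<n. Pm n U p $$(i,j) * x$j))"
    by (rule qf_entry[OF Pm_carrier x])
  also have "\<dots> = (\<Sum>i<n. cnj (x$i) * U$$(i,p)) * c"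
    by (simp add: Pm_def c_def sum_distrib_left sum_distrib_right mult_ac)
  also have "\<dots> = cnj c * c" by (simp add: c_def mult_ac)
  also have "\<dots> = of_real ((cmod c)^2)" using complex_norm_square[of c] by (simp add: mult.commute)
  finally have e: "conjugate x \<bullet> (Pm n U p *\<^sub>v x) = of_real ((cmod c)^2)" .
  show "Re (conjugate x \<bullet> (Pm n U p *\<^sub>v x)) \<ge> 0" unfolding e by simp
  show "Im (conjugate x \<bullet> (Pm n U p *\<^sub>v x)) = 0" unfolding e by simp
qed

lemma cp_psd:
  assumes cp: "completely_positive n m \<Phi>" and X: "X \<in> carrier_mat n n" and ps: "psd_mat n X"
  shows "psd_mat m (\<Phi> X)"
proof -
  have L: "linear_map_mat n m \<Phi>" using cp by (simp add: completely_positive_def)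
  have PX: "\<Phi> X \<in> carrier_mat m m" using L X by (simp add: linear_map_mat_def)
  have blk: "block n X 0 0 = X" using X by (auto simp: block_def intro!: eq_matI)
  have "ampliate n m 1 \<Phi> X = \<Phi> X"
    using PX by (intro eq_matI) (auto simp: ampliate_def blk)
  moreover have "psd_mat (1*m) (ampliate n m 1 \<Phi> X)"
  proof -
    have h: "\<forall>k\<ge>1. \<forall>X. psd_mat (k*n) X \<longrightarrow> psd_mat (k*m) (ampliate n m k \<Phi> X)"
      using cp unfolding completely_positive_def by blast
    show ?thesis using h[rule_format, of 1 X] ps by simp
  qed
  ultimately show ?thesis by simp
qed

definition Eq :: "nat \<Rightarrow> complex mat \<Rightarrow> complex mat \<Rightarrow> nat \<Rightarrow> complex" where
  "Eq m V M q = (\<Sum>s<m. V$$(q,s) * (\<Sum>t<m. M$$(s,t) * cnj(V$$(q,t))))"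

lemma Eq_lin: fixes N :: nat shows "Eq m V (mat m m (\<lambda>(s,t). \<Sum>p<N. c p * F p $$ (s,t))) q = (\<Sum>p<N. c p * Eq m V (F p) q)"
proof -
  have "Eq m V (mat m m (\<lambda>(s,t). \<Sum>p<N. c p * F p $$ (s,t))) q =
     (\<Sum>s<m. \<Sum>t<m. \<Sum>p<N. c p * (V$$(q,s) * (F p $$(s,t) * cnj(V$$(q,t)))))"
    by (simp add: Eq_def sum_distrib_left sum_distrib_right mult_ac)
  also have "\<dots> = (\<Sum>s<m. \<Sum>p<N. \<Sum>t<m. c p * (V$$(q,s) * (F p $$(s,t) * cnj(V$$(q,t)))))"
    by (intro sum.cong refl sum.swap)
  also have "\<dots> = (\<Sum>p<N. \<Sum>s<m. \<Sum>t<m. c p * (V$$(q,s) * (F p $$(s,t) * cnj(V$$(q,t)))))"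
    by (rule sum.swap)
  also have "\<dots> = (\<Sum>p<N. c p * Eq m V (F p) q)"
    by (simp add: Eq_def sum_distrib_left)
  finally show ?thesis .
qed

lemma Eq_psd:
  assumes "psd_mat m M" "q < m"
  shows "Re (Eq m V M q) \<ge> 0" "Im (Eq m V M q) = 0"
proof -
  have M: "M \<in> carrier_mat m m" using assms by (simp add: psd_mat_def hermitian_mat_def)
  define x where "x = vec m (\<lambda>t. cnj (V$$(q,t)))"
  have x: "x \<in> carrier_vec m" by (simp add: x_def)
  have "conjugate x \<bullet> (M *\<^sub>v x) = Eq m V M q"
    by (subst qf_entry[OF M x]) (simp add: Eq_def x_def)
  then show "Re (Eq m V M q) \<ge> 0" "Im (Eq m V M q) = 0"
    using assms x unfolding psd_mat_def by metis+
qed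


lemma Eq_one: assumes V: "unitary_mat m V" and q: "q < m" shows "Eq m V (1\<^sub>m m) q = 1"
proof -
  have "Eq m V (1\<^sub>m m) q = (\<Sum>s<m. V$$(q,s) * cnj (V$$(q,s)))"
  proof (unfold Eq_def, rule sum.cong[OF refl])
    fix s assume s: "s \<in> {..<m}"
    have "(\<Sum>t<m. (1\<^sub>m m :: complex mat)$$(s,t) * cnj(V$$(q,t))) = (\<Sum>t<m. if s = t then cnj(V$$(q,t)) else 0)"
      using s by (intro sum.cong refl) auto
    also have "\<dots> = cnj (V$$(q,s))" using s by (subst sum.delta') auto
    finally show "V$$(q,s) * (\<Sum>t<m. (1\<^sub>m m :: complex mat)$$(s,t) * cnj(V$$(q,t))) = V$$(q,s) * cnj (V$$(q,s))" by simp
  qed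
  also have "\<dots> = 1" using unit2[OF V q q] by simp
  finally show ?thesis .
qed

lemma Eq_trace: assumes V: "unitary_mat m V" and M: "M \<in> carrier_mat m m"
  shows "(\<Sum>q<m. Eq m V M q) = mtrace M"
proof -
  have "(\<Sum>q<m. Eq m V M q) = (\<Sum>q<m. \<Sum>s<m. \<Sum>t<m. M$$(s,t) * (cnj(V$$(q,t)) * V$$(q,s)))"
    by (simp add: Eq_def sum_distrib_left mult_ac)
  also have "\<dots> = (\<Sum>s<m. \<Sum>q<m. \<Sum>t<m. M$$(s,t) * (cnj(V$$(q,t)) * V$$(q,s)))"
    by (rule sum.swap)
  also have "\<dots> = (\<Sum>s<m. \<Sum>t<m. \<Sum>q<m. M$$(s,t) * (cnj(V$$(q,t)) * V$$(q,s)))"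
    by (intro sum.cong refl sum.swap)
  also have "\<dots> = (\<Sum>s<m. \<Sum>t<m. if t = s then M$$(s,t) else 0)"
    by (intro sum.cong refl) (simp add: sum_distrib_left[symmetric] unit1[OF V])
  also have "\<dots> = (\<Sum>s<m. M$$(s,s))" by (intro sum.cong refl) (simp add: sum.delta)
  also have "\<dots> = mtrace M" using M by (simp add: mtrace_def)
  finally show ?thesis .
qed

lemma forward:
  fixes \<Phi> :: "complex mat \<Rightarrow> complex mat" and a b :: "real mat"
  assumes U: "unitary_mat n U" and V: "unitary_mat m V"
    and a: "a \<in> carrier_mat k n" and b: "b \<in> carrier_mat k m"
    and Ac: "\<forall>i<k. A i \<in> carrier_mat n n" and Bc: "\<forall>i<k. B i \<in> carrier_mat m m"
    and A_diag: "\<forall>i<k. cadj U * A i * U = cdiag n (\<lambda>j. a $$ (i,j))"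
    and B_diag: "\<forall>i<k. V * B i * cadj V = cdiag m (\<lambda>j. b $$ (i,j))"
    and cp: "completely_positive n m \<Phi>" and maps: "\<forall>i<k. \<Phi> (A i) = B i"
  shows "\<exists>D\<in>carrier_mat n m. nonneg_mat D \<and> b = a * D \<and>
     (unital_map n m \<Phi> \<longrightarrow> column_stochastic D) \<and> (trace_preserving n \<Phi> \<longrightarrow> row_stochastic D)"
proof -
  have L: "linear_map_mat n m \<Phi>" using cp by (simp add: completely_positive_def)
  have Uc: "U \<in> carrier_mat n n" and Vc: "V \<in> carrier_mat m m" using U V by (auto simp: unitary_mat_def)
  have Pc: "\<forall>p<n. Pm n U p \<in> carrier_mat n n" by simp
  define e where "e = (\<lambda>p q. Eq m V (\<Phi> (Pm n U p)) q)"
  have psdF: "psd_mat m (\<Phi> (Pm n U p))" for p by (rule cp_psd[OF cp Pm_carrier Pm_psd])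
  have ereal: "of_real (Re (e p q)) = e p q" if "q < m" for p q
    using Eq_psd(2)[OF psdF that] by (simp add: e_def complex_eq_iff)
  have enn: "Re (e p q) \<ge> 0" if "q < m" for p q
    using Eq_psd(1)[OF psdF that] by (simp add: e_def)
  define D where "D = mat n m (\<lambda>(p,q). Re (e p q))"
  have Dc: "D \<in> carrier_mat n m" by (simp add: D_def)
  have Dnn: "nonneg_mat D" using enn by (simp add: nonneg_mat_def D_def)
  have Dent: "complex_of_real (D$$(p,q)) = e p q" if "p < n" "q < m" for p q
    using that ereal by (simp add: D_def)
  have Arep: "A i = mat n n (\<lambda>(r,c). \<Sum>p<n. complex_of_real (a$$(i,p)) * Pm n U p $$ (r,c))" if i: "i < k" for i
  proof (rule eq_matI)
    fix r c assume rc: "r < dim_row (mat n n (\<lambda>(r,c). \<Sum>p<n. complex_of_real (a$$(i,p)) * Pm n U p $$ (r,c)))"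
      "c < dim_col (mat n n (\<lambda>(r,c). \<Sum>p<n. complex_of_real (a$$(i,p)) * Pm n U p $$ (r,c)))"
    then have rc': "r < n" "c < n" by auto
    show "A i $$ (r,c) = mat n n (\<lambda>(r,c). \<Sum>p<n. complex_of_real (a$$(i,p)) * Pm n U p $$ (r,c)) $$ (r,c)"
      using LA[OF U _ _ rc'] Ac A_diag i rc' by (auto simp: Pm_def mult_ac intro!: sum.cong)
  qed (use Ac i in auto)
  have Brep: "B i = mat m m (\<lambda>(s,t). \<Sum>p<n. complex_of_real (a$$(i,p)) * \<Phi> (Pm n U p) $$ (s,t))" if i: "i < k" for i
    using maps i Arep[OF i] lin_sum[OF L Pc] by metis
  have bEq: "complex_of_real (b$$(i,q)) = Eq m V (B i) q" if i: "i < k" and q: "q < m" for i q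
  proof -
    have Bi: "B i \<in> carrier_mat m m" using Bc i by auto
    have "complex_of_real (b$$(i,q)) = (V * B i * cadj V) $$ (q,q)" using B_diag i q by (simp add: cdiag_def)
    also have "\<dots> = (\<Sum>t<m. (\<Sum>s<m. V$$(q,s) * B i $$(s,t)) * cadj V$$(t,q))"
      using Vc Bi q by (intro triple_entry[of _ m m _ m _ m]) auto
    also have "\<dots> = (\<Sum>t<m. \<Sum>s<m. V$$(q,s) * (B i $$(s,t) * cnj(V$$(q,t))))"
      using Vc q by (intro sum.cong refl) (simp add: sum_distrib_right sum_distrib_left mult_ac)
    also have "\<dots> = Eq m V (B i) q" unfolding Eq_def by (subst sum.swap) (simp add: sum_distrib_left)
    finally show ?thesis .
  qed
  have bD: "b = a * D"
  proof (rule eq_matI)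
    fix i q assume iq: "i < dim_row (a * D)" "q < dim_col (a * D)"
    then have i: "i < k" and q: "q < m" using a Dc by auto
    have "complex_of_real (b$$(i,q)) = (\<Sum>p<n. complex_of_real (a$$(i,p)) * e p q)"
      using bEq[OF i q] Brep[OF i] by (simp add: Eq_lin e_def)
    also have "\<dots> = complex_of_real (\<Sum>p<n. a$$(i,p) * D$$(p,q))"
      using Dent q by simp
    finally have "b$$(i,q) = (\<Sum>p<n. a$$(i,p) * D$$(p,q))" by (simp only: of_real_eq_iff)
    also have "\<dots> = (a * D) $$ (i,q)"
      using a Dc i q by (simp add: scalar_prod_def atLeast0LessThan)
    finally show "b $$ (i,q) = (a*D) $$ (i,q)" .
  qed (use a b Dc in auto)
  have colst: "column_stochastic D" if un: "unital_map n m \<Phi>"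
  proof -
    have one: "1\<^sub>m n = mat n n (\<lambda>(r,c). \<Sum>p<n. 1 * Pm n U p $$ (r,c))"
      by (rule eq_matI) (auto simp: Pm_def unit2[OF U])
    have h1: "1\<^sub>m m = mat m m (\<lambda>(s,t). \<Sum>p<n. 1 * \<Phi> (Pm n U p) $$ (s,t))"
      using un lin_sum[OF L Pc, of "\<lambda>_. 1"] one by (simp add: unital_map_def)
    have "Eq m V (1\<^sub>m m) q = (\<Sum>p<n. 1 * e p q)" for q unfolding e_def by (subst h1, rule Eq_lin)
    then have "(\<Sum>p<n. e p q) = 1" if "q < m" for q using Eq_one[OF V that] by simp
    then have "(\<Sum>p<n. D$$(p,q)) = 1" if q: "q < m" for q
    proof -
      have "complex_of_real (\<Sum>p<n. D$$(p,q)) = (\<Sum>p<n. e p q)"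
        unfolding of_real_sum using Dent q by (intro sum.cong refl) auto
      then have "complex_of_real (\<Sum>p<n. D$$(p,q)) = 1" using \<open>\<And>q. q < m \<Longrightarrow> (\<Sum>p<n. e p q) = 1\<close>[OF q] by simp
      then show ?thesis by (simp only: of_real_eq_1_iff)
    qed
    then show ?thesis using Dnn Dc by (simp add: column_stochastic_def)
  qed
  have rowst: "row_stochastic D" if tp: "trace_preserving n \<Phi>"
  proof -
    have "(\<Sum>q<m. e p q) = 1" if p: "p < n" for p
    proof -
      have "(\<Sum>q<m. e p q) = mtrace (\<Phi> (Pm n U p))"
        unfolding e_def using L by (intro Eq_trace[OF V]) (simp add: linear_map_mat_def)
      also have "\<dots> = mtrace (Pm n U p)" using tp by (simp add: trace_preserving_def)
      also have "\<dots> = (\<Sum>i<n. cnj (U$$(i,p)) * U$$(i,p))" by (simp add: mtrace_def Pm_def mult_ac)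
      also have "\<dots> = 1" using unit1[OF U p p] by simp
      finally show ?thesis .
    qed
    then have "(\<Sum>q<m. D$$(p,q)) = 1" if p: "p < n" for p
    proof -
      have "complex_of_real (\<Sum>q<m. D$$(p,q)) = (\<Sum>q<m. e p q)"
        unfolding of_real_sum using Dent p by (intro sum.cong refl) auto
      then have "complex_of_real (\<Sum>q<m. D$$(p,q)) = 1" using \<open>\<And>p. p < n \<Longrightarrow> (\<Sum>q<m. e p q) = 1\<close>[OF p] by simp
      then show ?thesis by (simp only: of_real_eq_1_iff)
    qed
    then show ?thesis using Dnn Dc by (simp add: row_stochastic_def)
  qed
  show ?thesis using Dc Dnn bD colst rowst by blast
qed


lemma offdiag_entry:
  assumes U: "unitary_mat n U" and A: "A \<in> carrier_mat n n" and d: "cadj U * A * U = cdiag n f"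
    and p: "p < n" and p': "p' < n"
  shows "(\<Sum>i<n. \<Sum>j<n. cnj(U$$(i,p)) * A$$(i,j) * U$$(j,p')) = (if p = p' then of_real (f p) else 0)"
proof -
  have Uc: "U \<in> carrier_mat n n" using U by (auto simp: unitary_mat_def)
  have "(if p = p' then of_real (f p) else 0) = (cadj U * A * U) $$ (p,p')" using d p p' by (simp add: cdiag_def)
  also have "\<dots> = (\<Sum>l<n. (\<Sum>l'<n. cadj U$$(p,l') * A $$(l',l)) * U$$(l,p'))"
    using Uc A p p' by (intro triple_entry[of _ n n _ n _ n]) auto
  also have "\<dots> = (\<Sum>j<n. \<Sum>i<n. cnj(U$$(i,p)) * A$$(i,j) * U$$(j,p'))"
    using Uc p by (simp add: sum_distrib_right)
  also have "\<dots> = (\<Sum>i<n. \<Sum>j<n. cnj(U$$(i,p)) * A$$(i,j) * U$$(j,p'))" by (rule sum.swap)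
  finally show ?thesis by simp
qed

lemma W_entry:
  assumes Uc: "U \<in> carrier_mat n n" and Vc: "V \<in> carrier_mat m m" and D: "D \<in> carrier_mat n m"
    and j: "j < m" and i: "i < n" and c: "c < m"
  shows "(U * Fmat D j * V) $$ (i,c) = (\<Sum>l<n. U$$(i,l) * of_real (sqrt (D$$(l,j)))) * V$$(j,c)"
proof -
  have F: "Fmat D j \<in> carrier_mat n m" using D by (simp add: Fmat_def)
  have "(U * Fmat D j * V) $$ (i,c) = (\<Sum>l<m. (\<Sum>l'<n. U$$(i,l') * Fmat D j $$(l',l)) * V$$(l,c))"
    using Uc F Vc i c by (intro triple_entry[of _ n n _ m _ m]) auto
  also have "\<dots> = (\<Sum>l<m. if l = j then (\<Sum>l'<n. U$$(i,l') * of_real (sqrt (D$$(l',j)))) * V$$(l,c) else 0)"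
    using D by (intro sum.cong refl) (auto simp: Fmat_def)
  also have "\<dots> = (\<Sum>l<n. U$$(i,l) * of_real (sqrt (D$$(l,j)))) * V$$(j,c)"
    using j by (subst sum.delta) auto
  finally show ?thesis .
qed

lemma kraus_entry:
  assumes U: "unitary_mat n U" and Vc: "V \<in> carrier_mat m m" and D: "D \<in> carrier_mat n m"
    and Dnn: "nonneg_mat D"
    and A: "A \<in> carrier_mat n n" and dA: "cadj U * A * U = cdiag n fa"
    and j: "j < m" and r: "r < m" and c: "c < m"
  shows "(cadj (U * Fmat D j * V) * A * (U * Fmat D j * V)) $$ (r,c) =
    cnj (V$$(j,r)) * of_real (\<Sum>l<n. D$$(l,j) * fa l) * V$$(j,c)"
proof -
  have Uc: "U \<in> carrier_mat n n" using U by (auto simp: unitary_mat_def)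
  define W where "W = U * Fmat D j * V"
  have F: "Fmat D j \<in> carrier_mat n m" using D by (simp add: Fmat_def)
  have Wc: "W \<in> carrier_mat n m" unfolding W_def using mult_carrier_mat[OF mult_carrier_mat[OF Uc F] Vc] .
  define s where "s = (\<lambda>l. complex_of_real (sqrt (D$$(l,j))))"
  define g where "g = (\<lambda>x. \<Sum>l<n. U$$(x,l) * s l)"
  have We: "W $$ (x,y) = g x * V$$(j,y)" if "x < n" "y < m" for x y
    using W_entry[OF Uc Vc D j that] by (simp add: W_def g_def s_def)
  have S: "(\<Sum>y<n. \<Sum>x<n. cnj (g x) * A$$(x,y) * g y) = of_real (\<Sum>l<n. D$$(l,j) * fa l)"
  proof -
    have "(\<Sum>y<n. \<Sum>x<n. cnj (g x) * A$$(x,y) * g y) =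
      (\<Sum>y<n. \<Sum>x<n. \<Sum>l<n. \<Sum>l'<n. s l * s l' * (cnj(U$$(x,l)) * A$$(x,y) * U$$(y,l')))"
      by (simp add: g_def s_def sum_distrib_left sum_distrib_right mult_ac)
    also have "\<dots> = (\<Sum>l'<n. \<Sum>l<n. \<Sum>y<n. \<Sum>x<n. s l * s l' * (cnj(U$$(x,l)) * A$$(x,y) * U$$(y,l')))"
      by (rule perm4b)
    also have "\<dots> = (\<Sum>l'<n. \<Sum>l<n. s l * s l' * (\<Sum>x<n. \<Sum>y<n. cnj(U$$(x,l)) * A$$(x,y) * U$$(y,l')))"
      by (intro sum.cong refl) (subst sum.swap, simp add: sum_distrib_left mult_ac)
    also have "\<dots> = (\<Sum>l'<n. \<Sum>l<n. if l = l' then s l * s l * of_real (fa l) else 0)"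
      by (intro sum.cong refl) (simp add: offdiag_entry[OF U A dA])
    also have "\<dots> = (\<Sum>l<n. s l * s l * of_real (fa l))" by (simp add: sum.delta)
    also have "\<dots> = of_real (\<Sum>l<n. D$$(l,j) * fa l)"
      using Dnn D j by (simp add: s_def nonneg_mat_def of_real_mult[symmetric] del: of_real_mult)
    finally show ?thesis .
  qed
  have "(cadj W * A * W) $$ (r,c) = (\<Sum>y<n. (\<Sum>x<n. cadj W $$(r,x) * A$$(x,y)) * W$$(y,c))"
    using Wc A r c by (intro triple_entry[of _ m n _ n _ m]) auto
  also have "\<dots> = cnj (V$$(j,r)) * V$$(j,c) * (\<Sum>y<n. \<Sum>x<n. cnj (g x) * A$$(x,y) * g y)"
    using Wc r c by (simp add: We sum_distrib_left sum_distrib_right mult_ac)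
  also have "\<dots> = cnj (V$$(j,r)) * of_real (\<Sum>l<n. D$$(l,j) * fa l) * V$$(j,c)"
    unfolding S by (simp add: mult_ac)
  finally show ?thesis unfolding W_def .
qed


lemma mtrace_one: "mtrace (1\<^sub>m N) = of_nat N"
  by (simp add: mtrace_def)

theorem theorem2p1:
  fixes n m k :: nat and A B :: "nat \<Rightarrow> complex mat" and U V :: "complex mat"
    and a b :: "real mat"
  assumes n: "n > 0" and m: "m > 0"
    and A_herm: "\<forall>i<k. hermitian_mat n (A i)"
    and B_herm: "\<forall>i<k. hermitian_mat m (B i)"
    and A_comm: "\<forall>i<k. \<forall>j<k. A i * A j = A j * A i"
    and B_comm: "\<forall>i<k. \<forall>j<k. B i * B j = B j * B i"
    and U: "unitary_mat n U" and V: "unitary_mat m V"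
    and a: "a \<in> carrier_mat k n" and b: "b \<in> carrier_mat k m"
    and A_diag: "\<forall>i<k. cadj U * A i * U = cdiag n (\<lambda>j. a $$ (i,j))"
    and B_diag: "\<forall>i<k. V * B i * cadj V = cdiag m (\<lambda>j. b $$ (i,j))"
  shows
    "((\<exists>\<Phi>. completely_positive n m \<Phi> \<and> (\<forall>i<k. \<Phi> (A i) = B i)) \<longleftrightarrow>
      (\<exists>D \<in> carrier_mat n m. nonneg_mat D \<and> b = a * D))
   \<and> (\<forall>D \<in> carrier_mat n m. nonneg_mat D \<and> b = a * D \<longrightarrow>
        (\<forall>i<k. B i = msum m m (\<lambda>j. cadj (U * Fmat D j * V) * A i * (U * Fmat D j * V)) {..<m}))
   \<and> ((\<exists>\<Phi>. completely_positive n m \<Phi> \<and> unital_map n m \<Phi> \<and> (\<forall>i<k. \<Phi> (A i) = B i)) \<longleftrightarrow>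
      (\<exists>D \<in> carrier_mat n m. column_stochastic D \<and> b = a * D))
   \<and> ((\<exists>\<Phi>. completely_positive n m \<Phi> \<and> trace_preserving n \<Phi> \<and> (\<forall>i<k. \<Phi> (A i) = B i)) \<longleftrightarrow>
      (\<exists>D \<in> carrier_mat n m. row_stochastic D \<and> b = a * D))
   \<and> ((\<exists>\<Phi>. completely_positive n m \<Phi> \<and> unital_map n m \<Phi> \<and> trace_preserving n \<Phi>
          \<and> (\<forall>i<k. \<Phi> (A i) = B i)) \<longleftrightarrow>
      (\<exists>D \<in> carrier_mat n m. doubly_stochastic D \<and> b = a * D))
   \<and> ((\<exists>\<Phi>. completely_positive n m \<Phi> \<and> unital_map n m \<Phi> \<and> trace_preserving n \<Phi>
          \<and> (\<forall>i<k. \<Phi> (A i) = B i)) \<longrightarrow> m = n)"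
proof -
  have Uc: "U \<in> carrier_mat n n" and Vc: "V \<in> carrier_mat m m" using U V by (auto simp: unitary_mat_def)
  have Ac: "\<forall>i<k. A i \<in> carrier_mat n n" using A_herm by (simp add: hermitian_mat_def)
  have Bc: "\<forall>i<k. B i \<in> carrier_mat m m" using B_herm by (simp add: hermitian_mat_def)
  have bent: "b$$(i,q) = (\<Sum>p<n. a$$(i,p) * D$$(p,q))"
    if D: "D \<in> carrier_mat n m" and bD: "b = a * D" and i: "i < k" and q: "q < m" for D i q
    using D i q a by (simp add: bD scalar_prod_def atLeast0LessThan)
  have bwd: "completely_positive n m (Psi n m U V D) \<and> (\<forall>i<k. Psi n m U V D (A i) = B i)"
    if D: "D \<in> carrier_mat n m" and nn: "nonneg_mat D" and bD: "b = a * D" for D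
  proof
    show "completely_positive n m (Psi n m U V D)"
      using nn D by (intro Psi_cp) (auto simp: nonneg_mat_def)
    show "\<forall>i<k. Psi n m U V D (A i) = B i"
    proof (intro allI impI)
      fix i assume i: "i < k"
      show "Psi n m U V D (A i) = B i"
        using Psi_maps[OF U V _ _ _ _, of "A i" "B i" "\<lambda>j. a$$(i,j)" "\<lambda>j. b$$(i,j)" D]
          Ac Bc A_diag B_diag i bent[OF D bD i] by auto
    qed
  qed
  have fwd: "\<exists>D\<in>carrier_mat n m. nonneg_mat D \<and> b = a * D \<and>
     (unital_map n m \<Phi> \<longrightarrow> column_stochastic D) \<and> (trace_preserving n \<Phi> \<longrightarrow> row_stochastic D)"
    if "completely_positive n m \<Phi>" "\<forall>i<k. \<Phi> (A i) = B i" for \<Phi>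
    by (rule forward[OF U V a b Ac Bc A_diag B_diag that])
  have mn: "m = n" if cp: "completely_positive n m \<Phi>" and un: "unital_map n m \<Phi>" and tp: "trace_preserving n \<Phi>" for \<Phi>
  proof -
    have "(of_nat m :: complex) = mtrace (\<Phi> (1\<^sub>m n))" using un by (simp add: unital_map_def mtrace_one)
    also have "\<dots> = of_nat n" using tp by (simp add: trace_preserving_def mtrace_one)
    finally show ?thesis by simp
  qed
  have kraus: "\<forall>i<k. B i = msum m m (\<lambda>j. cadj (U * Fmat D j * V) * A i * (U * Fmat D j * V)) {..<m}"
    if D: "D \<in> carrier_mat n m" and nn: "nonneg_mat D" and bD: "b = a * D" for D
  proof (intro allI impI eq_matI)
    fix i r c assume i: "i < k" and r: "r < dim_row (msum m m (\<lambda>j. cadj (U * Fmat D j * V) * A i * (U * Fmat D j * V)) {..<m})"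
      and c: "c < dim_col (msum m m (\<lambda>j. cadj (U * Fmat D j * V) * A i * (U * Fmat D j * V)) {..<m})"
    have r': "r < m" and c': "c < m" using r c by (auto simp: msum_def)
    have "msum m m (\<lambda>j. cadj (U * Fmat D j * V) * A i * (U * Fmat D j * V)) {..<m} $$ (r,c) =
        (\<Sum>j<m. cnj (V$$(j,r)) * of_real (\<Sum>l<n. D$$(l,j) * a$$(i,l)) * V$$(j,c))"
      using r' c' kraus_entry[OF U Vc D nn _ _ _ r' c'] Ac A_diag i by (simp add: msum_def)
    also have "\<dots> = (\<Sum>j<m. cnj (V$$(j,r)) * of_real (b$$(i,j)) * V$$(j,c))"
      using bent[OF D bD i] by (intro sum.cong refl) (simp add: mult_ac)
    also have "\<dots> = B i $$ (r,c)"
      using LB[OF V _ _ r' c', of "B i" "\<lambda>j. b$$(i,j)"] Bc B_diag i by simp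
    finally show "B i $$ (r,c) = msum m m (\<lambda>j. cadj (U * Fmat D j * V) * A i * (U * Fmat D j * V)) {..<m} $$ (r,c)" by simp
  qed (use Bc in \<open>auto simp: msum_def\<close>)
  show ?thesis
  proof (intro conjI)
    show "(\<exists>\<Phi>. completely_positive n m \<Phi> \<and> (\<forall>i<k. \<Phi> (A i) = B i)) \<longleftrightarrow>
      (\<exists>D \<in> carrier_mat n m. nonneg_mat D \<and> b = a * D)"
      using fwd bwd by meson
    show "\<forall>D \<in> carrier_mat n m. nonneg_mat D \<and> b = a * D \<longrightarrow>
        (\<forall>i<k. B i = msum m m (\<lambda>j. cadj (U * Fmat D j * V) * A i * (U * Fmat D j * V)) {..<m})"
      using kraus by blast
    show "(\<exists>\<Phi>. completely_positive n m \<Phi> \<and> unital_map n m \<Phi> \<and> (\<forall>i<k. \<Phi> (A i) = B i)) \<longleftrightarrow>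
      (\<exists>D \<in> carrier_mat n m. column_stochastic D \<and> b = a * D)"
    proof
      assume "\<exists>\<Phi>. completely_positive n m \<Phi> \<and> unital_map n m \<Phi> \<and> (\<forall>i<k. \<Phi> (A i) = B i)"
      then show "\<exists>D \<in> carrier_mat n m. column_stochastic D \<and> b = a * D" using fwd by meson
    next
      assume "\<exists>D \<in> carrier_mat n m. column_stochastic D \<and> b = a * D"
      then obtain D where D: "D \<in> carrier_mat n m" "column_stochastic D" "b = a * D" by blast
      then have "nonneg_mat D" by (simp add: column_stochastic_def)
      then show "\<exists>\<Phi>. completely_positive n m \<Phi> \<and> unital_map n m \<Phi> \<and> (\<forall>i<k. \<Phi> (A i) = B i)"
        using bwd[OF D(1) _ D(3)] Psi_unital[OF U V D(1,2)] by blast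
    qed
    show "(\<exists>\<Phi>. completely_positive n m \<Phi> \<and> trace_preserving n \<Phi> \<and> (\<forall>i<k. \<Phi> (A i) = B i)) \<longleftrightarrow>
      (\<exists>D \<in> carrier_mat n m. row_stochastic D \<and> b = a * D)"
    proof
      assume "\<exists>\<Phi>. completely_positive n m \<Phi> \<and> trace_preserving n \<Phi> \<and> (\<forall>i<k. \<Phi> (A i) = B i)"
      then show "\<exists>D \<in> carrier_mat n m. row_stochastic D \<and> b = a * D" using fwd by meson
    next
      assume "\<exists>D \<in> carrier_mat n m. row_stochastic D \<and> b = a * D"
      then obtain D where D: "D \<in> carrier_mat n m" "row_stochastic D" "b = a * D" by blast
      then have "nonneg_mat D" by (simp add: row_stochastic_def)
      then show "\<exists>\<Phi>. completely_positive n m \<Phi> \<and> trace_preserving n \<Phi> \<and> (\<forall>i<k. \<Phi> (A i) = B i)"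
        using bwd[OF D(1) _ D(3)] Psi_tp[OF U V D(1,2)] by blast
    qed
    show "(\<exists>\<Phi>. completely_positive n m \<Phi> \<and> unital_map n m \<Phi> \<and> trace_preserving n \<Phi>
          \<and> (\<forall>i<k. \<Phi> (A i) = B i)) \<longleftrightarrow>
      (\<exists>D \<in> carrier_mat n m. doubly_stochastic D \<and> b = a * D)"
    proof
      assume "\<exists>\<Phi>. completely_positive n m \<Phi> \<and> unital_map n m \<Phi> \<and> trace_preserving n \<Phi>
          \<and> (\<forall>i<k. \<Phi> (A i) = B i)"
      then obtain \<Phi> where P: "completely_positive n m \<Phi>" "unital_map n m \<Phi>" "trace_preserving n \<Phi>"
          "\<forall>i<k. \<Phi> (A i) = B i" by blast
      have "m = n" by (rule mn[OF P(1-3)])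
      moreover obtain D where "D \<in> carrier_mat n m" "nonneg_mat D" "b = a * D"
        "column_stochastic D" "row_stochastic D" using fwd[OF P(1) P(4)] P(2,3) by blast
      ultimately show "\<exists>D \<in> carrier_mat n m. doubly_stochastic D \<and> b = a * D"
        by (auto simp: doubly_stochastic_def)
    next
      assume "\<exists>D \<in> carrier_mat n m. doubly_stochastic D \<and> b = a * D"
      then obtain D where D: "D \<in> carrier_mat n m" "doubly_stochastic D" "b = a * D" by blast
      then have cs: "column_stochastic D" and rs: "row_stochastic D" by (auto simp: doubly_stochastic_def)
      then have "nonneg_mat D" by (simp add: row_stochastic_def)
      then show "\<exists>\<Phi>. completely_positive n m \<Phi> \<and> unital_map n m \<Phi> \<and> trace_preserving n \<Phi>
          \<and> (\<forall>i<k. \<Phi> (A i) = B i)"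
        using bwd[OF D(1) _ D(3)] Psi_unital[OF U V D(1) cs] Psi_tp[OF U V D(1) rs] by blast
    qed
    show "(\<exists>\<Phi>. completely_positive n m \<Phi> \<and> unital_map n m \<Phi> \<and> trace_preserving n \<Phi>
          \<and> (\<forall>i<k. \<Phi> (A i) = B i)) \<longrightarrow> m = n"
      using mn by blast
  qed
qed

end
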